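(* In SGD with stochastic batch size as described in the context, setting $\alpha_i=b_i$, for every iteration $i$, $$\mathbb{E}\,\alpha_i^2\|g_i\|^2\le 2b_{\max}\,\mathbb{E}\,\alpha_i\|\nabla\mathcal{L}(\mathcal{D},\theta_i)\|^2+2\sigma^2\,\mathbb{E}\,b_i.$$ Moreover, if $\theta\mapsto\mathcal{L}(\mathcal{D},\theta)$ has $L$-Lipschitz gradient and $\theta^*$ is a global minimizer of it, then $$\mathbb{E}\,\alpha_i^2\|g_i\|^2\le 4b_{\max}L\,\mathbb{E}\,\alpha_i(\mathcal{L}(\mathcal{D},\theta_i)-\mathcal{L}(\mathcal{D},\theta^* ))+2\sigma^2\,\mathbb{E}\,b_i.$$
   Context: $\mathcal{L}(\mathcal{D},\theta)=\frac{1}{|\mathcal{D}|}\sum_{z\in\mathcal{D}}\ell(z,\theta)$ for a finite dataset $\mathcal{D}$ and differentiable loss $\ell$. At iteration $i$ with parameter $\theta_i$, samples $z_i^1,z_i^2,\dots$ are drawn from $\mathcal{D}$, each satisfying, conditionally on $\theta_i$ and all previously drawn samples, $\mathbb{E}[\nabla\ell(z_i^s,\theta_i)]=\nabla\mathcal{L}(\mathcal{D},\theta_i)$ and $\mathbb{E}\|\nabla\ell(z_i^s,\theta_i)-\nabla\mathcal{L}(\mathcal{D},\theta_i)\|^2\le\sigma^2$. Let $g_i^s=\nabla\ell(z_i^s,\theta_i)$. The batch size $b_i$ is a random stopping time with respect to the natural filtration of these samples, satisfying $b_i\le b_{\max}$, and $g_i=\frac{1}{b_i}\sum_{s=1}^{b_i}g_i^s$.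 *)

theory Defs
  imports "HOL-Analysis.Analysis" "HOL-Probability.Probability"
begin

text \<open>Gradient of a real-valued function on a Euclidean space: the (unique, when f is
  differentiable at x) vector g with Frechet derivative h \<mapsto> g \<bullet> h.\<close>
definition grad :: "('v::euclidean_space \<Rightarrow> real) \<Rightarrow> 'v \<Rightarrow> 'v" where
  "grad f x = (THE g. (f has_derivative (\<lambda>h. g \<bullet> h)) (at x))"

definition emp_loss :: "'z set \<Rightarrow> ('z \<Rightarrow> 'v \<Rightarrow> real) \<Rightarrow> 'v \<Rightarrow> real" where
  "emp_loss D loss \<theta> = (1 / real (card D)) * (\<Sum>d\<in>D. loss d \<theta>)"

text \<open>Natural filtration of the samples z 1, z 2, ... of one iteration, on top of the
  history sigma-algebra H (which contains theta_i and all previously drawn samples).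
  smp_filt M H z s = sigma(H, z 1, ..., z s).\<close>
definition smp_filt :: "'a measure \<Rightarrow> 'a measure \<Rightarrow> (nat \<Rightarrow> 'a \<Rightarrow> 'z) \<Rightarrow> nat \<Rightarrow> 'a measure" where
  "smp_filt M H z s =
     sigma (space M) (sets H \<union> (\<Union>t\<in>{1..s}. {z t -` A \<inter> space M | A. True}))"

end

theory Submission imports Defs begin

lemma grad_eq:
  fixes f :: "'v::euclidean_space \<Rightarrow> real"
  assumes "(f has_derivative (\<lambda>h. v \<bullet> h)) (at x)"
  shows "grad f x = v"
  unfolding grad_def
proof (rule the_equality)
  show "(f has_derivative (\<lambda>h. v \<bullet> h)) (at x)" by fact
next
  fix w assume "(f has_derivative (\<lambda>h. w \<bullet> h)) (at x)"
  then have "(\<lambda>h. w \<bullet> h) = (\<lambda>h. v \<bullet> h)" using has_derivative_unique assms by blast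
  then have "w \<bullet> (w - v) = v \<bullet> (w - v)" by meson
  then have "(w - v) \<bullet> (w - v) = 0" by (simp add: inner_diff_left)
  then show "w = v" by simp
qed

lemma grad_has:
  fixes f :: "'v::euclidean_space \<Rightarrow> real"
  assumes "f differentiable (at x)"
  shows "(f has_derivative (\<lambda>h. grad f x \<bullet> h)) (at x)"
proof -
  obtain f' where fd: "(f has_derivative f') (at x)" using assms differentiable_def by blast
  then have lin: "linear f'" using has_derivative_linear by blast
  define v where "v = (\<Sum>b\<in>Basis. f' b *\<^sub>R b)"
  have "f' h = v \<bullet> h" for h
  proof -
    have "f' h = f' (\<Sum>b\<in>Basis. (h \<bullet> b) *\<^sub>R b)" by (simp add: euclidean_representation)
    also have "\<dots> = (\<Sum>b\<in>Basis. (h \<bullet> b) * f' b)"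
      using lin by (simp add: linear_sum linear_scale)
    also have "\<dots> = v \<bullet> h" unfolding v_def by (simp add: inner_sum_right inner_commute mult.commute)
    finally show ?thesis .
  qed
  then have "f' = (\<lambda>h. v \<bullet> h)" by auto
  with fd have "(f has_derivative (\<lambda>h. v \<bullet> h)) (at x)" by simp
  moreover then have "grad f x = v" by (rule grad_eq)
  ultimately show ?thesis by simp
qed

lemma grad_emp_loss:
  fixes loss :: "'z \<Rightarrow> 'v::euclidean_space \<Rightarrow> real"
  assumes "\<And>d x. d \<in> D \<Longrightarrow> loss d differentiable (at x)"
  shows "(emp_loss D loss has_derivative (\<lambda>h. ((1 / real (card D)) *\<^sub>R (\<Sum>d\<in>D. grad (loss d) x)) \<bullet> h)) (at x)"
    and "grad (emp_loss D loss) x = (1 / real (card D)) *\<^sub>R (\<Sum>d\<in>D. grad (loss d) x)"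
proof -
  have "((\<lambda>\<theta>. \<Sum>d\<in>D. loss d \<theta>) has_derivative (\<lambda>h. \<Sum>d\<in>D. grad (loss d) x \<bullet> h)) (at x)"
    by (rule has_derivative_sum) (use grad_has assms in blast)
  then have "((\<lambda>\<theta>. (1 / real (card D)) * (\<Sum>d\<in>D. loss d \<theta>)) has_derivative
      (\<lambda>h. (1 / real (card D)) * (\<Sum>d\<in>D. grad (loss d) x \<bullet> h))) (at x)"
    by (rule has_derivative_mult_right)
  moreover have "(\<lambda>h. (1 / real (card D)) * (\<Sum>d\<in>D. grad (loss d) x \<bullet> h)) =
     (\<lambda>h. ((1 / real (card D)) *\<^sub>R (\<Sum>d\<in>D. grad (loss d) x)) \<bullet> h)"
    by (simp add: inner_sum_left)
  ultimately show 1: "(emp_loss D loss has_derivative (\<lambda>h. ((1 / real (card D)) *\<^sub>R (\<Sum>d\<in>D. grad (loss d) x)) \<bullet> h)) (at x)"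
    unfolding emp_loss_def[abs_def] by simp
  show "grad (emp_loss D loss) x = (1 / real (card D)) *\<^sub>R (\<Sum>d\<in>D. grad (loss d) x)"
    by (rule grad_eq[OF 1])
qed

lemma descent:
  fixes f :: "'v::euclidean_space \<Rightarrow> real"
  assumes fd: "\<And>x. (f has_derivative (\<lambda>h. G x \<bullet> h)) (at x)"
    and lip: "L-lipschitz_on UNIV G"
  shows "f (x + v) \<le> f x + G x \<bullet> v + L / 2 * (norm v)\<^sup>2"
proof -
  have L0: "0 \<le> L" using lip by (simp add: lipschitz_on_def)
  define \<psi> where "\<psi> t = f (x + t *\<^sub>R v) - t * (G x \<bullet> v) - L / 2 * t\<^sup>2 * (norm v)\<^sup>2" for t
  have der: "(\<psi> has_real_derivative (G (x + t *\<^sub>R v) \<bullet> v - G x \<bullet> v - L * t * (norm v)\<^sup>2)) (at t)" for t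
  proof -
    have "((\<lambda>t. x + t *\<^sub>R v) has_derivative (\<lambda>h. h *\<^sub>R v)) (at t)"
      by (auto intro!: derivative_eq_intros)
    from has_derivative_compose[OF this fd]
    have h1: "((\<lambda>t. f (x + t *\<^sub>R v)) has_derivative (\<lambda>h. G (x + t *\<^sub>R v) \<bullet> (h *\<^sub>R v))) (at t)" .
    have "(\<lambda>h. G (x + t *\<^sub>R v) \<bullet> (h *\<^sub>R v)) = (*) (G (x + t *\<^sub>R v) \<bullet> v)" by (auto simp: mult.commute)
    with h1 have "((\<lambda>t. f (x + t *\<^sub>R v)) has_real_derivative (G (x + t *\<^sub>R v) \<bullet> v)) (at t)"
      by (simp add: has_field_derivative_def)
    then show ?thesis unfolding \<psi>_def
      by (auto intro!: derivative_eq_intros simp: power2_eq_square)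
  qed
  have "\<psi> 1 \<le> \<psi> 0"
  proof (rule DERIV_nonpos_imp_nonincreasing[of 0 1])
    fix t :: real assume t: "0 \<le> t" "t \<le> 1"
    have "G (x + t *\<^sub>R v) \<bullet> v - G x \<bullet> v = (G (x + t *\<^sub>R v) - G x) \<bullet> v" by (simp add: inner_diff_left)
    also have "\<dots> \<le> norm (G (x + t *\<^sub>R v) - G x) * norm v" by (rule norm_cauchy_schwarz)
    also have "\<dots> \<le> (L * norm (t *\<^sub>R v)) * norm v"
    proof (rule mult_right_mono)
      have "dist (G (x + t *\<^sub>R v)) (G x) \<le> L * dist (x + t *\<^sub>R v) x"
        using lip by (simp add: lipschitz_on_def)
      then show "norm (G (x + t *\<^sub>R v) - G x) \<le> L * norm (t *\<^sub>R v)" by (simp add: dist_norm)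
    qed simp
    also have "\<dots> = L * t * (norm v)\<^sup>2" using t by (simp add: power2_eq_square)
    finally show "\<exists>y. (\<psi> has_real_derivative y) (at t) \<and> y \<le> 0" using der by force
  qed simp
  then show ?thesis unfolding \<psi>_def by simp
qed

lemma grad_sq_bound:
  fixes f :: "'v::euclidean_space \<Rightarrow> real"
  assumes fd: "\<And>x. (f has_derivative (\<lambda>h. G x \<bullet> h)) (at x)"
    and lip: "L-lipschitz_on UNIV G"
    and mn: "\<And>y. f m \<le> f y"
  shows "(norm (G x))\<^sup>2 \<le> 2 * L * (f x - f m)"
proof -
  have L0: "0 \<le> L" using lip by (simp add: lipschitz_on_def)
  have key: "f m \<le> f x - t * (norm (G x))\<^sup>2 + L / 2 * t\<^sup>2 * (norm (G x))\<^sup>2" for t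
  proof -
    have "f m \<le> f (x + (- t *\<^sub>R G x))" by (rule mn)
    also have "\<dots> \<le> f x + G x \<bullet> (- t *\<^sub>R G x) + L / 2 * (norm (- t *\<^sub>R G x))\<^sup>2"
      by (rule descent[OF fd lip])
    also have "\<dots> = f x - t * (norm (G x))\<^sup>2 + L / 2 * t\<^sup>2 * (norm (G x))\<^sup>2"
    proof -
      have "G x \<bullet> (- t *\<^sub>R G x) = - t * (norm (G x))\<^sup>2" by (simp add: power2_norm_eq_inner)
      moreover have "(norm (- t *\<^sub>R G x))\<^sup>2 = t\<^sup>2 * (norm (G x))\<^sup>2" by (simp add: power_mult_distrib)
      moreover have "G x \<bullet> G x = (norm (G x))\<^sup>2" by (simp add: power2_norm_eq_inner)
      ultimately show ?thesis by (simp add: algebra_simps)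
    qed
    finally show ?thesis .
  qed
  show ?thesis
  proof (cases "L = 0")
    case True
    have "(norm (G x))\<^sup>2 = 0"
    proof (rule ccontr)
      assume ne: "(norm (G x))\<^sup>2 \<noteq> 0"
      then have pos: "(norm (G x))\<^sup>2 > 0" by simp
      have "f m \<le> f x - ((f x - f m + 1) / (norm (G x))\<^sup>2) * (norm (G x))\<^sup>2"
        using key[of "(f x - f m + 1) / (norm (G x))\<^sup>2"] True by simp
      also have "\<dots> = f m - 1" using ne by simp
      finally show False by simp
    qed
    then show ?thesis using True by simp
  next
    case False
    then have Lp: "L > 0" using L0 by simp
    have "f m \<le> f x - (1/L) * (norm (G x))\<^sup>2 + L / 2 * (1/L)\<^sup>2 * (norm (G x))\<^sup>2" by (rule key)
    also have "\<dots> = f x - (norm (G x))\<^sup>2 / (2 * L)" using Lp by (simp add: field_simps power2_eq_square)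
    finally have "(norm (G x))\<^sup>2 / (2 * L) \<le> f x - f m" by simp
    then show ?thesis using Lp by (simp add: field_simps)
  qed
qed

theorem lemma2:
  fixes M :: "'a measure" and H :: "'a measure"
    and D :: "'z set" and loss :: "'z \<Rightarrow> 'v::euclidean_space \<Rightarrow> real"
    and \<theta> :: "'a \<Rightarrow> 'v" and z :: "nat \<Rightarrow> 'a \<Rightarrow> 'z"
    and b :: "'a \<Rightarrow> nat" and b_max :: nat and \<sigma> :: real
  defines "F \<equiv> smp_filt M H z"
  defines "g \<equiv> (\<lambda>s \<omega>. grad (loss (z s \<omega>)) (\<theta> \<omega>))"
  defines "gradL \<equiv> grad (emp_loss D loss)"
  defines "g_i \<equiv> (\<lambda>\<omega>. (1 / real (b \<omega>)) *\<^sub>R (\<Sum>s=1..b \<omega>. g s \<omega>))"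
  defines "\<alpha> \<equiv> (\<lambda>\<omega>. real (b \<omega>))"
  assumes M: "prob_space M"
    and D: "finite D" "D \<noteq> {}"
    and loss_diff: "\<And>d x. d \<in> D \<Longrightarrow> loss d differentiable (at x)"
    and grad_meas: "\<And>d. d \<in> D \<Longrightarrow> grad (loss d) \<in> borel_measurable borel"
    and H: "subalgebra M H"
    and \<theta>_meas: "\<theta> \<in> borel_measurable H"
    and z_meas: "\<And>s. s \<ge> 1 \<Longrightarrow> z s \<in> measurable M (count_space UNIV)"
    and z_in: "\<And>s \<omega>. s \<ge> 1 \<Longrightarrow> \<omega> \<in> space M \<Longrightarrow> z s \<omega> \<in> D"
    and g_int: "\<And>s. s \<ge> 1 \<Longrightarrow> integrable M (g s)"
    and unbiased: "\<And>s j. s \<ge> 1 \<Longrightarrow> j \<in> Basis \<Longrightarrow>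
        AE \<omega> in M. real_cond_exp M (F (s - 1)) (\<lambda>\<omega>. g s \<omega> \<bullet> j) \<omega> = gradL (\<theta> \<omega>) \<bullet> j"
    and variance: "\<And>s. s \<ge> 1 \<Longrightarrow>
        AE \<omega> in M. nn_cond_exp M (F (s - 1))
           (\<lambda>\<omega>. ennreal ((norm (g s \<omega> - gradL (\<theta> \<omega>)))\<^sup>2)) \<omega> \<le> ennreal (\<sigma>\<^sup>2)"
    and b_stop: "stopping_time F b"
    and b_pos: "\<And>\<omega>. \<omega> \<in> space M \<Longrightarrow> 1 \<le> b \<omega>"
    and b_le: "\<And>\<omega>. \<omega> \<in> space M \<Longrightarrow> b \<omega> \<le> b_max"
  shows "((\<integral>\<^sup>+ \<omega>. ennreal ((\<alpha> \<omega>)\<^sup>2 * (norm (g_i \<omega>))\<^sup>2) \<partial>M)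
           \<le> ennreal (2 * real b_max) * (\<integral>\<^sup>+ \<omega>. ennreal (\<alpha> \<omega> * (norm (gradL (\<theta> \<omega>)))\<^sup>2) \<partial>M)
             + ennreal (2 * \<sigma>\<^sup>2) * (\<integral>\<^sup>+ \<omega>. ennreal (real (b \<omega>)) \<partial>M))
    \<and> (\<forall>L \<theta>s. L-lipschitz_on UNIV gradL \<longrightarrow> (\<forall>x. emp_loss D loss \<theta>s \<le> emp_loss D loss x) \<longrightarrow>
         (\<integral>\<^sup>+ \<omega>. ennreal ((\<alpha> \<omega>)\<^sup>2 * (norm (g_i \<omega>))\<^sup>2) \<partial>M)
           \<le> ennreal (4 * real b_max * L) *
               (\<integral>\<^sup>+ \<omega>. ennreal (\<alpha> \<omega> * (emp_loss D loss (\<theta> \<omega>) - emp_loss D loss \<theta>s)) \<partial>M)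
             + ennreal (2 * \<sigma>\<^sup>2) * (\<integral>\<^sup>+ \<omega>. ennreal (real (b \<omega>)) \<partial>M))"
proof -
  interpret prob_space M by (rule M)
  define gen where "gen s = sets H \<union> (\<Union>t\<in>{1..s}. {z t -` A \<inter> space M | A. True})" for s
  have spH: "space H = space M" and sH: "sets H \<subseteq> sets M" using H by (auto simp: subalgebra_def)
  have gen_sets: "gen s \<subseteq> sets M" for s
  proof -
    have "z t -` A \<inter> space M \<in> sets M" if "t \<ge> 1" for t A
      using measurable_sets[OF z_meas[OF that], of A] by simp
    then show ?thesis using sH unfolding gen_def by auto
  qed
  have gen_pow: "gen s \<subseteq> Pow (space M)" for s using gen_sets sets.sets_into_space by blast
  have sets_F: "sets (F s) = sigma_sets (space M) (gen s)" for s
    unfolding F_def smp_filt_def gen_def[symmetric] using gen_pow by (simp add: sets_measure_of)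
  have space_F: "space (F s) = space M" for s
    unfolding F_def smp_filt_def by (simp add: space_measure_of_conv)
  have subF: "subalgebra M (F s)" for s
    unfolding subalgebra_def using space_F sets_F sets.sigma_sets_subset[OF gen_sets] by auto
  have monoF: "sets (F s) \<subseteq> sets (F t)" if "s \<le> t" for s t
  proof -
    have "gen s \<subseteq> gen t" unfolding gen_def using that by (auto 0 4 intro!: bexI[where x="_::nat"])
    then show ?thesis unfolding sets_F by (rule sigma_sets_mono')
  qed
  have subFF: "subalgebra (F t) (F s)" if "s \<le> t" for s t
    using monoF[OF that] space_F by (auto simp: subalgebra_def)
  have subHF: "subalgebra (F t) H" for t
    using space_F spH sets_F by (auto simp: subalgebra_def gen_def)
  have sfs: "sigma_finite_subalgebra M (F s)" for s
    by (rule finite_measure_subalgebra_is_sigma_finite)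
       (simp add: finite_measure_subalgebra_def finite_measure_subalgebra_axioms_def subF finite_measure_axioms)
  have zF: "z s \<in> measurable (F t) (count_space D)" if "1 \<le> s" "s \<le> t" for s t
  proof (subst measurable_count_space_eq2[OF D(1)], intro conjI ballI)
    show "z s \<in> space (F t) \<rightarrow> D" unfolding space_F using z_in that by blast
    fix a assume "a \<in> D"
    have "z s -` {a} \<inter> space M \<in> gen t" unfolding gen_def using that by (intro UnI2 UN_I[of s]) auto
    then show "z s -` {a} \<inter> space (F t) \<in> sets (F t)" unfolding sets_F space_F by (rule sigma_sets.Basic)
  qed
  have \<theta>F: "\<theta> \<in> borel_measurable (F t)" for t
    by (rule measurable_from_subalg[OF subHF \<theta>_meas])
  have gradL_eq: "gradL x = (1 / real (card D)) *\<^sub>R (\<Sum>d\<in>D. grad (loss d) x)" for x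
    unfolding gradL_def by (rule grad_emp_loss(2)[OF loss_diff])
  have gradL_meas: "gradL \<in> borel_measurable borel"
    unfolding gradL_eq[abs_def] by (intro borel_measurable_scaleR borel_measurable_const borel_measurable_sum grad_meas)
  define G where "G \<omega> = gradL (\<theta> \<omega>)" for \<omega>
  define X where "X s \<omega> = g s \<omega> - G \<omega>" for s \<omega>
  have GF: "G \<in> borel_measurable (F t)" for t
    unfolding G_def by (rule measurable_compose[OF \<theta>F gradL_meas])
  have gF: "g s \<in> borel_measurable (F t)" if "1 \<le> s" "s \<le> t" for s t
  proof -
    have "(\<lambda>\<omega>. (\<lambda>d \<omega>. grad (loss d) (\<theta> \<omega>)) (z s \<omega>) \<omega>) \<in> borel_measurable (F t)"
      by (rule measurable_compose_countable'[OF _ zF[OF that]])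
         (use grad_meas \<theta>F D(1) in \<open>auto intro: measurable_compose countable_finite\<close>)
    then show ?thesis unfolding g_def by simp
  qed
  have XF: "X s \<in> borel_measurable (F t)" if "1 \<le> s" "s \<le> t" for s t
    unfolding X_def by (intro borel_measurable_diff gF[OF that] GF)
  have toM: "f \<in> measurable M N" if "f \<in> measurable (F t) N" for f :: "'a \<Rightarrow> 'b" and t N
    by (rule measurable_from_subalg[OF subF that])
  have bF: "Measurable.pred (F (s - 1)) (\<lambda>\<omega>. s \<le> b \<omega>)" if "1 \<le> s" for s
  proof -
    have "Measurable.pred (F (s - 1)) (\<lambda>\<omega>. s - 1 < b \<omega>)" by (rule stopping_timeD2[OF b_stop])
    moreover have "(s - 1 < b \<omega>) = (s \<le> b \<omega>)" for \<omega> using that by auto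
    ultimately show ?thesis by simp
  qed
  have bF': "Measurable.pred (F t) (\<lambda>\<omega>. s \<le> b \<omega>)" if "1 \<le> s" "s \<le> Suc t" for s t
  proof -
    have "s - 1 \<le> t" using that by simp
    from measurable_from_subalg[OF subFF[OF this] bF[OF that(1)]] show ?thesis .
  qed
  have XM: "X s \<in> borel_measurable M" if "1 \<le> s" for s using toM[OF XF[OF that order_refl]] .
  have GM: "G \<in> borel_measurable M" using toM[OF GF] .
  have var': "AE \<omega> in M. nn_cond_exp M (F (s - 1)) (\<lambda>\<omega>. ennreal ((norm (X s \<omega>))\<^sup>2)) \<omega> \<le> ennreal (\<sigma>\<^sup>2)"
    if "1 \<le> s" for s
    unfolding X_def G_def using variance[OF that] .
  have diag: "(\<integral>\<^sup>+ \<omega>. ennreal (if P \<omega> then (norm (X s \<omega>))\<^sup>2 else 0) \<partial>M)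
      \<le> (\<integral>\<^sup>+ \<omega>. ennreal (if P \<omega> then \<sigma>\<^sup>2 else 0) \<partial>M)"
    if s1: "1 \<le> s" and P: "Measurable.pred (F (s - 1)) P" for s P
  proof -
    define f where "f \<omega> = ennreal (if P \<omega> then 1 else 0)" for \<omega>
    have fF: "f \<in> borel_measurable (F (s - 1))" unfolding f_def using P by measurable
    have gM: "(\<lambda>\<omega>. ennreal ((norm (X s \<omega>))\<^sup>2)) \<in> borel_measurable M" using XM[OF s1] by measurable
    have "(\<integral>\<^sup>+ \<omega>. ennreal (if P \<omega> then (norm (X s \<omega>))\<^sup>2 else 0) \<partial>M)
        = (\<integral>\<^sup>+ \<omega>. f \<omega> * ennreal ((norm (X s \<omega>))\<^sup>2) \<partial>M)"
      by (rule nn_integral_cong) (simp add: f_def)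
    also have "\<dots> = (\<integral>\<^sup>+ \<omega>. f \<omega> * nn_cond_exp M (F (s - 1)) (\<lambda>\<omega>. ennreal ((norm (X s \<omega>))\<^sup>2)) \<omega> \<partial>M)"
      by (rule sigma_finite_subalgebra.nn_cond_exp_intg[OF sfs fF gM, symmetric])
    also have "\<dots> \<le> (\<integral>\<^sup>+ \<omega>. f \<omega> * ennreal (\<sigma>\<^sup>2) \<partial>M)"
      by (rule nn_integral_mono_AE) (use var'[OF s1] in \<open>auto elim!: eventually_mono intro: mult_left_mono\<close>)
    also have "\<dots> = (\<integral>\<^sup>+ \<omega>. ennreal (if P \<omega> then \<sigma>\<^sup>2 else 0) \<partial>M)"
      by (rule nn_integral_cong) (simp add: f_def)
    finally show ?thesis .
  qed
  have XL2: "integrable M (\<lambda>\<omega>. (norm (X s \<omega>))\<^sup>2)" if s1: "1 \<le> s" for s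
  proof (rule integrableI_nonneg)
    show "(\<lambda>\<omega>. (norm (X s \<omega>))\<^sup>2) \<in> borel_measurable M" using XM[OF s1] by measurable
    show "AE \<omega> in M. 0 \<le> (norm (X s \<omega>))\<^sup>2" by simp
    have "(\<integral>\<^sup>+ \<omega>. ennreal ((norm (X s \<omega>))\<^sup>2) \<partial>M) \<le> (\<integral>\<^sup>+ \<omega>. ennreal (\<sigma>\<^sup>2) \<partial>M)"
      using diag[OF s1, of "\<lambda>_. True"] by simp
    also have "\<dots> < \<infinity>" by (simp add: emeasure_space_1)
    finally show "(\<integral>\<^sup>+ \<omega>. ennreal ((norm (X s \<omega>))\<^sup>2) \<partial>M) < \<infinity>" .
  qed
  have gj_int: "integrable M (\<lambda>\<omega>. g s \<omega> \<bullet> j)" if "1 \<le> s" for s j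
    using g_int[OF that] by auto
  have Gj_int: "integrable M (\<lambda>\<omega>. G \<omega> \<bullet> j)" if j: "j \<in> Basis" for j
  proof -
    have ae: "AE \<omega> in M. real_cond_exp M (F (1 - 1)) (\<lambda>\<omega>. g 1 \<omega> \<bullet> j) \<omega> = G \<omega> \<bullet> j"
      unfolding G_def using unbiased[OF order_refl j] .
    have "integrable M (real_cond_exp M (F (1 - 1)) (\<lambda>\<omega>. g 1 \<omega> \<bullet> j))"
      by (rule sigma_finite_subalgebra.real_cond_exp_int(1)[OF sfs gj_int[OF order_refl]])
    moreover have "(\<lambda>\<omega>. G \<omega> \<bullet> j) \<in> borel_measurable M" using GM by measurable
    ultimately show ?thesis using integrable_cong_AE[OF borel_measurable_cond_exp2 _ ae] by blast
  qed
  have Xj_int: "integrable M (\<lambda>\<omega>. X s \<omega> \<bullet> j)" if "1 \<le> s" "j \<in> Basis" for s j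
  proof -
    have "integrable M (\<lambda>\<omega>. g s \<omega> \<bullet> j - G \<omega> \<bullet> j)"
      using gj_int[OF that(1)] Gj_int[OF that(2)] by (rule Bochner_Integration.integrable_diff)
    then show ?thesis by (simp add: X_def inner_diff_left)
  qed
  have ce0: "AE \<omega> in M. real_cond_exp M (F (s - 1)) (\<lambda>\<omega>. X s \<omega> \<bullet> j) \<omega> = 0"
    if s1: "1 \<le> s" and j: "j \<in> Basis" for s j
  proof -
    have eq: "(\<lambda>\<omega>. X s \<omega> \<bullet> j) = (\<lambda>\<omega>. g s \<omega> \<bullet> j - G \<omega> \<bullet> j)" by (simp add: X_def inner_diff_left)
    have a1: "AE \<omega> in M. real_cond_exp M (F (s - 1)) (\<lambda>\<omega>. g s \<omega> \<bullet> j - G \<omega> \<bullet> j) \<omega>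
        = real_cond_exp M (F (s - 1)) (\<lambda>\<omega>. g s \<omega> \<bullet> j) \<omega> - real_cond_exp M (F (s - 1)) (\<lambda>\<omega>. G \<omega> \<bullet> j) \<omega>"
      by (rule sigma_finite_subalgebra.real_cond_exp_diff[OF sfs gj_int[OF s1] Gj_int[OF j]])
    have a2: "AE \<omega> in M. real_cond_exp M (F (s - 1)) (\<lambda>\<omega>. g s \<omega> \<bullet> j) \<omega> = G \<omega> \<bullet> j"
      unfolding G_def using unbiased[OF s1 j] .
    have GjF: "(\<lambda>\<omega>. G \<omega> \<bullet> j) \<in> borel_measurable (F (s - 1))" using GF by measurable
    have a3: "AE \<omega> in M. real_cond_exp M (F (s - 1)) (\<lambda>\<omega>. G \<omega> \<bullet> j) \<omega> = G \<omega> \<bullet> j"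
      by (rule sigma_finite_subalgebra.real_cond_exp_F_meas[OF sfs Gj_int[OF j] GjF])
    show ?thesis unfolding eq using a1 a2 a3 by eventually_elim simp
  qed
  define I where "I s \<omega> = (if s \<le> b \<omega> then 1 else 0 :: real)" for s \<omega>
  have IM: "I s \<in> borel_measurable M" if "1 \<le> s" for s
  proof -
    have "Measurable.pred M (\<lambda>\<omega>. s \<le> b \<omega>)" using toM[OF bF[OF that]] by simp
    then show ?thesis unfolding I_def by measurable
  qed
  have I_int: "integrable M (I s)" if "1 \<le> s" for s
    by (rule integrable_const_bound[where B=1]) (auto simp: I_def IM[OF that])
  define S where "S t \<omega> = (\<Sum>s\<in>{1..t}. if s \<le> b \<omega> then X s \<omega> else 0)" for t \<omega>
  have SF: "S t \<in> borel_measurable (F t)" for t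
    unfolding S_def
  proof (intro borel_measurable_sum)
    fix s assume "s \<in> {1..t}"
    then have s: "1 \<le> s" "s \<le> t" by auto
    have [measurable]: "X s \<in> borel_measurable (F t)" by (rule XF[OF s])
    have [measurable]: "Measurable.pred (F t) (\<lambda>\<omega>. s \<le> b \<omega>)" using s by (intro bF') auto
    show "(\<lambda>\<omega>. if s \<le> b \<omega> then X s \<omega> else 0) \<in> borel_measurable (F t)" by measurable
  qed
  have SM: "S t \<in> borel_measurable M" for t using toM[OF SF] .
  have main: "integrable M (\<lambda>\<omega>. (norm (S t \<omega>))\<^sup>2) \<and>
      (\<integral>\<omega>. (norm (S t \<omega>))\<^sup>2 \<partial>M) \<le> \<sigma>\<^sup>2 * (\<Sum>s\<in>{1..t}. \<integral>\<omega>. I s \<omega> \<partial>M)" for t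
  proof (induction t)
    case 0
    then show ?case by (simp add: S_def)
  next
    case (Suc t)
    have s1: "1 \<le> Suc t" by simp
    define c where "c j \<omega> = (if Suc t \<le> b \<omega> then S t \<omega> \<bullet> j else 0) * (X (Suc t) \<omega> \<bullet> j)" for j \<omega>
    define e where "e \<omega> = (if Suc t \<le> b \<omega> then (norm (X (Suc t) \<omega>))\<^sup>2 else 0)" for \<omega>
    have pw: "(norm (S (Suc t) \<omega>))\<^sup>2 = (norm (S t \<omega>))\<^sup>2 + 2 * (\<Sum>j\<in>Basis. c j \<omega>) + e \<omega>" for \<omega>
    proof (cases "Suc t \<le> b \<omega>")
      case True
      have "S (Suc t) \<omega> = S t \<omega> + X (Suc t) \<omega>" using True by (simp add: S_def)
      moreover have "S t \<omega> \<bullet> X (Suc t) \<omega> = (\<Sum>j\<in>Basis. c j \<omega>)"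
        using True by (subst euclidean_inner) (simp add: c_def)
      ultimately show ?thesis using True
        by (simp add: e_def power2_norm_eq_inner inner_add_left inner_add_right inner_commute)
    next
      case False
      then show ?thesis by (simp add: S_def c_def e_def)
    qed
    have L2S: "integrable M (\<lambda>\<omega>. (norm (S t \<omega>))\<^sup>2)" using Suc.IH by blast
    have L2X: "integrable M (\<lambda>\<omega>. (norm (X (Suc t) \<omega>))\<^sup>2)" by (rule XL2[OF s1])
    have predt: "Measurable.pred (F t) (\<lambda>\<omega>. Suc t \<le> b \<omega>)" using bF[OF s1] by simp
    have XMt: "X (Suc t) \<in> borel_measurable M" by (rule XM[OF s1])
    have c_int: "integrable M (c j)" if j: "j \<in> Basis" for j
    proof (rule Bochner_Integration.integrable_bound[OF Bochner_Integration.integrable_add[OF L2S L2X]])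
      show "c j \<in> borel_measurable M" unfolding c_def using toM[OF predt] SM XMt by measurable
      show "AE \<omega> in M. norm (c j \<omega>) \<le> norm ((norm (S t \<omega>))\<^sup>2 + (norm (X (Suc t) \<omega>))\<^sup>2)"
      proof (intro AE_I2)
        fix \<omega>
        have "norm (c j \<omega>) \<le> norm (S t \<omega>) * norm (X (Suc t) \<omega>)"
          unfolding c_def using Basis_le_norm[OF j, of "S t \<omega>"] Basis_le_norm[OF j, of "X (Suc t) \<omega>"]
          by (auto simp: abs_mult intro!: mult_mono)
        also have "\<dots> \<le> (norm (S t \<omega>))\<^sup>2 + (norm (X (Suc t) \<omega>))\<^sup>2"
          using sum_squares_bound[of "norm (S t \<omega>)" "norm (X (Suc t) \<omega>)"]
            mult_nonneg_nonneg[OF norm_ge_zero norm_ge_zero, of "S t \<omega>" "X (Suc t) \<omega>"] by linarith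
        also have "\<dots> = norm ((norm (S t \<omega>))\<^sup>2 + (norm (X (Suc t) \<omega>))\<^sup>2)" by simp
        finally show "norm (c j \<omega>) \<le> norm ((norm (S t \<omega>))\<^sup>2 + (norm (X (Suc t) \<omega>))\<^sup>2)" .
      qed
    qed
    have c0: "(\<integral>\<omega>. c j \<omega> \<partial>M) = 0" if j: "j \<in> Basis" for j
    proof -
      define f where "f \<omega> = (if Suc t \<le> b \<omega> then S t \<omega> \<bullet> j else 0)" for \<omega>
      have fF: "f \<in> borel_measurable (F t)" unfolding f_def using predt SF by measurable
      have XjM: "(\<lambda>\<omega>. X (Suc t) \<omega> \<bullet> j) \<in> borel_measurable M" using XMt by measurable
      have cf: "c j = (\<lambda>\<omega>. f \<omega> * (X (Suc t) \<omega> \<bullet> j))" by (simp add: fun_eq_iff c_def f_def)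
      have ci: "integrable M (\<lambda>\<omega>. f \<omega> * (X (Suc t) \<omega> \<bullet> j))" using c_int[OF j] by (simp only: cf)
      have "(\<integral>\<omega>. c j \<omega> \<partial>M) = (\<integral>\<omega>. f \<omega> * (X (Suc t) \<omega> \<bullet> j) \<partial>M)" by (simp add: c_def f_def)
      also have "\<dots> = (\<integral>\<omega>. f \<omega> * real_cond_exp M (F t) (\<lambda>\<omega>. X (Suc t) \<omega> \<bullet> j) \<omega> \<partial>M)"
        by (rule sigma_finite_subalgebra.real_cond_exp_intg(2)[OF sfs ci fF XjM, symmetric])
      also have "\<dots> = (\<integral>\<omega>. 0 \<partial>M)"
      proof (rule integral_cong_AE)
        show "(\<lambda>\<omega>. f \<omega> * real_cond_exp M (F t) (\<lambda>\<omega>. X (Suc t) \<omega> \<bullet> j) \<omega>) \<in> borel_measurable M"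
          using toM[OF fF] by measurable
        show "AE \<omega> in M. f \<omega> * real_cond_exp M (F t) (\<lambda>\<omega>. X (Suc t) \<omega> \<bullet> j) \<omega> = 0"
          using ce0[OF s1 j] by (auto elim!: eventually_mono)
      qed simp
      finally show ?thesis by simp
    qed
    have e_int: "integrable M e"
    proof (rule Bochner_Integration.integrable_bound[OF L2X])
      show "e \<in> borel_measurable M" unfolding e_def using toM[OF predt] XMt by measurable
    qed (auto simp: e_def)
    have e_le: "(\<integral>\<omega>. e \<omega> \<partial>M) \<le> \<sigma>\<^sup>2 * (\<integral>\<omega>. I (Suc t) \<omega> \<partial>M)"
    proof -
      have "ennreal (\<integral>\<omega>. e \<omega> \<partial>M) = (\<integral>\<^sup>+ \<omega>. ennreal (e \<omega>) \<partial>M)"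
        by (rule nn_integral_eq_integral[OF e_int, symmetric]) (simp add: e_def)
      also have "\<dots> \<le> (\<integral>\<^sup>+ \<omega>. ennreal (if Suc t \<le> b \<omega> then \<sigma>\<^sup>2 else 0) \<partial>M)"
        unfolding e_def by (rule diag[OF s1]) (use predt in simp)
      also have "\<dots> = (\<integral>\<^sup>+ \<omega>. ennreal (\<sigma>\<^sup>2 * I (Suc t) \<omega>) \<partial>M)"
        by (rule nn_integral_cong) (simp add: I_def)
      also have "\<dots> = ennreal (\<integral>\<omega>. \<sigma>\<^sup>2 * I (Suc t) \<omega> \<partial>M)"
        by (intro nn_integral_eq_integral Bochner_Integration.integrable_mult_right I_int[OF s1]) (auto simp: I_def)
      also have "\<dots> = ennreal (\<sigma>\<^sup>2 * (\<integral>\<omega>. I (Suc t) \<omega> \<partial>M))" by simp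
      finally have le: "ennreal (\<integral>\<omega>. e \<omega> \<partial>M) \<le> ennreal (\<sigma>\<^sup>2 * (\<integral>\<omega>. I (Suc t) \<omega> \<partial>M))" .
      have "0 \<le> \<sigma>\<^sup>2 * (\<integral>\<omega>. I (Suc t) \<omega> \<partial>M)"
        by (intro mult_nonneg_nonneg integral_nonneg_AE) (auto simp: I_def)
      with le show ?thesis using ennreal_le_iff by blast
    qed
    have int_sum: "integrable M (\<lambda>\<omega>. (norm (S t \<omega>))\<^sup>2 + 2 * (\<Sum>j\<in>Basis. c j \<omega>) + e \<omega>)"
      using L2S c_int e_int by (intro Bochner_Integration.integrable_add Bochner_Integration.integrable_mult_right
          Bochner_Integration.integrable_sum) auto
    have "(\<integral>\<omega>. (norm (S (Suc t) \<omega>))\<^sup>2 \<partial>M) = (\<integral>\<omega>. (norm (S t \<omega>))\<^sup>2 + 2 * (\<Sum>j\<in>Basis. c j \<omega>) + e \<omega> \<partial>M)"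
      by (simp only: pw)
    also have "\<dots> = (\<integral>\<omega>. (norm (S t \<omega>))\<^sup>2 \<partial>M) + 2 * (\<Sum>j\<in>Basis. \<integral>\<omega>. c j \<omega> \<partial>M) + (\<integral>\<omega>. e \<omega> \<partial>M)"
      using L2S c_int e_int
      by (simp add: Bochner_Integration.integral_add Bochner_Integration.integrable_add
          Bochner_Integration.integrable_sum Bochner_Integration.integral_sum)
    also have "\<dots> = (\<integral>\<omega>. (norm (S t \<omega>))\<^sup>2 \<partial>M) + (\<integral>\<omega>. e \<omega> \<partial>M)" using c0 by simp
    also have "\<dots> \<le> \<sigma>\<^sup>2 * (\<Sum>s\<in>{1..t}. \<integral>\<omega>. I s \<omega> \<partial>M) + \<sigma>\<^sup>2 * (\<integral>\<omega>. I (Suc t) \<omega> \<partial>M)"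
      using Suc.IH e_le by linarith
    also have "\<dots> = \<sigma>\<^sup>2 * (\<Sum>s\<in>{1..Suc t}. \<integral>\<omega>. I s \<omega> \<partial>M)" by (simp add: algebra_simps)
    finally have le: "(\<integral>\<omega>. (norm (S (Suc t) \<omega>))\<^sup>2 \<partial>M) \<le> \<sigma>\<^sup>2 * (\<Sum>s\<in>{1..Suc t}. \<integral>\<omega>. I s \<omega> \<partial>M)" .
    have "integrable M (\<lambda>\<omega>. (norm (S (Suc t) \<omega>))\<^sup>2)" using int_sum by (simp only: pw)
    with le show ?case by blast
  qed
  have bsum: "(\<Sum>s\<in>{1..b_max}. I s \<omega>) = real (b \<omega>)" if "\<omega> \<in> space M" for \<omega>
  proof -
    have "(\<Sum>s\<in>{1..b_max}. I s \<omega>) = (\<Sum>s\<in>{s\<in>{1..b_max}. s \<le> b \<omega>}. 1)"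
      unfolding I_def by (rule sum.inter_filter[symmetric]) simp
    also have "{s\<in>{1..b_max}. s \<le> b \<omega>} = {1..b \<omega>}" using b_le[OF that] by auto
    finally show ?thesis by simp
  qed
  have Sbm: "S b_max \<omega> = (\<Sum>s\<in>{1..b \<omega>}. X s \<omega>)" if "\<omega> \<in> space M" for \<omega>
  proof -
    have "S b_max \<omega> = (\<Sum>s\<in>{s\<in>{1..b_max}. s \<le> b \<omega>}. X s \<omega>)"
      unfolding S_def by (rule sum.inter_filter[symmetric]) simp
    also have "{s\<in>{1..b_max}. s \<le> b \<omega>} = {1..b \<omega>}" using b_le[OF that] by auto
    finally show ?thesis .
  qed
  have bM: "(\<lambda>\<omega>. real (b \<omega>)) \<in> borel_measurable M"
  proof -
    have "(\<lambda>\<omega>. \<Sum>s\<in>{1..b_max}. I s \<omega>) \<in> borel_measurable M"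
      by (intro borel_measurable_sum) (auto intro: IM)
    then show ?thesis by (rule measurable_cong[THEN iffD1, rotated]) (erule bsum)
  qed
  have b_int_eq: "(\<integral>\<omega>. real (b \<omega>) \<partial>M) = (\<Sum>s\<in>{1..b_max}. \<integral>\<omega>. I s \<omega> \<partial>M)"
  proof -
    have "(\<integral>\<omega>. real (b \<omega>) \<partial>M) = (\<integral>\<omega>. (\<Sum>s\<in>{1..b_max}. I s \<omega>) \<partial>M)"
      by (rule Bochner_Integration.integral_cong) (simp, erule bsum[symmetric])
    also have "\<dots> = (\<Sum>s\<in>{1..b_max}. \<integral>\<omega>. I s \<omega> \<partial>M)"
      by (rule Bochner_Integration.integral_sum) (auto intro: I_int)
    finally show ?thesis .
  qed
  have b_nn: "(\<integral>\<^sup>+ \<omega>. ennreal (real (b \<omega>)) \<partial>M) = ennreal (\<integral>\<omega>. real (b \<omega>) \<partial>M)"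
  proof (rule nn_integral_eq_integral)
    show "integrable M (\<lambda>\<omega>. real (b \<omega>))"
      by (rule integrable_const_bound[where B="real b_max"]) (auto simp: b_le bM)
  qed simp
  have Snorm: "(\<integral>\<omega>. (norm (S b_max \<omega>))\<^sup>2 \<partial>M) \<le> \<sigma>\<^sup>2 * (\<integral>\<omega>. real (b \<omega>) \<partial>M)"
    and Sint: "integrable M (\<lambda>\<omega>. (norm (S b_max \<omega>))\<^sup>2)"
    using main[of b_max] b_int_eq by auto
  have pw: "(\<alpha> \<omega>)\<^sup>2 * (norm (g_i \<omega>))\<^sup>2 \<le> 2 * (norm (S b_max \<omega>))\<^sup>2 + 2 * real b_max * (\<alpha> \<omega> * (norm (G \<omega>))\<^sup>2)"
    if \<omega>: "\<omega> \<in> space M" for \<omega>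
  proof -
    have b1: "1 \<le> b \<omega>" and bm: "b \<omega> \<le> b_max" using b_pos[OF \<omega>] b_le[OF \<omega>] by auto
    have sumg: "(\<Sum>s\<in>{1..b \<omega>}. g s \<omega>) = S b_max \<omega> + real (b \<omega>) *\<^sub>R G \<omega>"
      by (simp add: Sbm[OF \<omega>] X_def sum_subtractf sum_constant_scaleR)
    have "(\<alpha> \<omega>)\<^sup>2 * (norm (g_i \<omega>))\<^sup>2 = (norm (\<Sum>s\<in>{1..b \<omega>}. g s \<omega>))\<^sup>2"
      using b1 by (simp add: \<alpha>_def g_i_def power_mult_distrib power2_eq_square field_simps)
    also have "\<dots> = (norm (S b_max \<omega> + real (b \<omega>) *\<^sub>R G \<omega>))\<^sup>2" by (simp only: sumg)
    also have "\<dots> \<le> (norm (S b_max \<omega>) + norm (real (b \<omega>) *\<^sub>R G \<omega>))\<^sup>2"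
      by (intro power_mono norm_triangle_ineq) simp
    also have "\<dots> \<le> 2 * (norm (S b_max \<omega>))\<^sup>2 + 2 * (norm (real (b \<omega>) *\<^sub>R G \<omega>))\<^sup>2"
      using sum_squares_bound[of "norm (S b_max \<omega>)" "norm (real (b \<omega>) *\<^sub>R G \<omega>)"]
      by (simp add: power2_sum)
    also have "(norm (real (b \<omega>) *\<^sub>R G \<omega>))\<^sup>2 = real (b \<omega>) * (real (b \<omega>) * (norm (G \<omega>))\<^sup>2)"
      by (simp add: power_mult_distrib power2_eq_square)
    also have "real (b \<omega>) * (real (b \<omega>) * (norm (G \<omega>))\<^sup>2) \<le> real b_max * (real (b \<omega>) * (norm (G \<omega>))\<^sup>2)"
      using bm by (intro mult_right_mono) auto
    finally show ?thesis by (simp add: \<alpha>_def)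
  qed
  have GnM: "(\<lambda>\<omega>. \<alpha> \<omega> * (norm (G \<omega>))\<^sup>2) \<in> borel_measurable M" unfolding \<alpha>_def using bM GM by measurable
  have SnM: "(\<lambda>\<omega>. (norm (S b_max \<omega>))\<^sup>2) \<in> borel_measurable M" using SM by measurable
  have part1: "(\<integral>\<^sup>+ \<omega>. ennreal ((\<alpha> \<omega>)\<^sup>2 * (norm (g_i \<omega>))\<^sup>2) \<partial>M)
      \<le> ennreal (2 * real b_max) * (\<integral>\<^sup>+ \<omega>. ennreal (\<alpha> \<omega> * (norm (gradL (\<theta> \<omega>)))\<^sup>2) \<partial>M)
        + ennreal (2 * \<sigma>\<^sup>2) * (\<integral>\<^sup>+ \<omega>. ennreal (real (b \<omega>)) \<partial>M)"
  proof -
    have "(\<integral>\<^sup>+ \<omega>. ennreal ((\<alpha> \<omega>)\<^sup>2 * (norm (g_i \<omega>))\<^sup>2) \<partial>M)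
        \<le> (\<integral>\<^sup>+ \<omega>. ennreal (2 * (norm (S b_max \<omega>))\<^sup>2) + ennreal (2 * real b_max) * ennreal (\<alpha> \<omega> * (norm (G \<omega>))\<^sup>2) \<partial>M)"
    proof (rule nn_integral_mono)
      fix \<omega> assume \<omega>: "\<omega> \<in> space M"
      have "ennreal ((\<alpha> \<omega>)\<^sup>2 * (norm (g_i \<omega>))\<^sup>2) \<le> ennreal (2 * (norm (S b_max \<omega>))\<^sup>2 + 2 * real b_max * (\<alpha> \<omega> * (norm (G \<omega>))\<^sup>2))"
        using pw[OF \<omega>] by (rule ennreal_leI)
      also have "\<dots> = ennreal (2 * (norm (S b_max \<omega>))\<^sup>2) + ennreal (2 * real b_max) * ennreal (\<alpha> \<omega> * (norm (G \<omega>))\<^sup>2)"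
        by (simp add: \<alpha>_def ennreal_plus ennreal_mult[symmetric] mult.assoc)
      finally show "ennreal ((\<alpha> \<omega>)\<^sup>2 * (norm (g_i \<omega>))\<^sup>2) \<le> \<dots>" .
    qed
    also have "\<dots> = (\<integral>\<^sup>+ \<omega>. ennreal (2 * (norm (S b_max \<omega>))\<^sup>2) \<partial>M)
        + ennreal (2 * real b_max) * (\<integral>\<^sup>+ \<omega>. ennreal (\<alpha> \<omega> * (norm (G \<omega>))\<^sup>2) \<partial>M)"
      using SnM GnM by (simp add: nn_integral_add nn_integral_cmult)
    also have "(\<integral>\<^sup>+ \<omega>. ennreal (2 * (norm (S b_max \<omega>))\<^sup>2) \<partial>M) = ennreal (\<integral>\<omega>. 2 * (norm (S b_max \<omega>))\<^sup>2 \<partial>M)"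
      by (rule nn_integral_eq_integral) (use Sint in auto)
    also have "\<dots> \<le> ennreal (2 * \<sigma>\<^sup>2) * (\<integral>\<^sup>+ \<omega>. ennreal (real (b \<omega>)) \<partial>M)"
    proof -
      have "(\<integral>\<omega>. 2 * (norm (S b_max \<omega>))\<^sup>2 \<partial>M) \<le> 2 * \<sigma>\<^sup>2 * (\<integral>\<omega>. real (b \<omega>) \<partial>M)"
        using Snorm by simp
      then have "ennreal (\<integral>\<omega>. 2 * (norm (S b_max \<omega>))\<^sup>2 \<partial>M) \<le> ennreal (2 * \<sigma>\<^sup>2 * (\<integral>\<omega>. real (b \<omega>) \<partial>M))"
        by (rule ennreal_leI)
      also have "\<dots> = ennreal (2 * \<sigma>\<^sup>2) * (\<integral>\<^sup>+ \<omega>. ennreal (real (b \<omega>)) \<partial>M)"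
        by (simp add: b_nn ennreal_mult)
      finally show ?thesis .
    qed
    finally show ?thesis by (simp add: G_def add.commute add_right_mono)
  qed
  have fd: "(emp_loss D loss has_derivative (\<lambda>h. gradL x \<bullet> h)) (at x)" for x
    using grad_emp_loss(1)[OF loss_diff, where x=x] by (simp add: gradL_eq)
  have emp_cont: "continuous_on UNIV (emp_loss D loss)"
    using fd by (intro continuous_at_imp_continuous_on ballI) (blast intro: has_derivative_continuous)
  have empM: "emp_loss D loss \<in> borel_measurable borel" by (rule borel_measurable_continuous_onI[OF emp_cont])
  have \<theta>M: "\<theta> \<in> borel_measurable M" using toM[OF \<theta>F] .
  have part2: "(\<integral>\<^sup>+ \<omega>. ennreal ((\<alpha> \<omega>)\<^sup>2 * (norm (g_i \<omega>))\<^sup>2) \<partial>M)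
           \<le> ennreal (4 * real b_max * L) *
               (\<integral>\<^sup>+ \<omega>. ennreal (\<alpha> \<omega> * (emp_loss D loss (\<theta> \<omega>) - emp_loss D loss \<theta>s)) \<partial>M)
             + ennreal (2 * \<sigma>\<^sup>2) * (\<integral>\<^sup>+ \<omega>. ennreal (real (b \<omega>)) \<partial>M)"
    if lip: "L-lipschitz_on UNIV gradL" and mn: "\<forall>x. emp_loss D loss \<theta>s \<le> emp_loss D loss x" for L \<theta>s
  proof -
    have L0: "0 \<le> L" using lip by (simp add: lipschitz_on_def)
    have Q: "(\<integral>\<^sup>+ \<omega>. ennreal (\<alpha> \<omega> * (norm (gradL (\<theta> \<omega>)))\<^sup>2) \<partial>M)
        \<le> ennreal (2 * L) * (\<integral>\<^sup>+ \<omega>. ennreal (\<alpha> \<omega> * (emp_loss D loss (\<theta> \<omega>) - emp_loss D loss \<theta>s)) \<partial>M)"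
    proof -
      have "(\<integral>\<^sup>+ \<omega>. ennreal (\<alpha> \<omega> * (norm (gradL (\<theta> \<omega>)))\<^sup>2) \<partial>M)
          \<le> (\<integral>\<^sup>+ \<omega>. ennreal (2 * L) * ennreal (\<alpha> \<omega> * (emp_loss D loss (\<theta> \<omega>) - emp_loss D loss \<theta>s)) \<partial>M)"
      proof (rule nn_integral_mono)
        fix \<omega>
        have a0: "0 \<le> \<alpha> \<omega>" by (simp add: \<alpha>_def)
        have d0: "0 \<le> emp_loss D loss (\<theta> \<omega>) - emp_loss D loss \<theta>s" using mn by simp
        have "(norm (gradL (\<theta> \<omega>)))\<^sup>2 \<le> 2 * L * (emp_loss D loss (\<theta> \<omega>) - emp_loss D loss \<theta>s)"
          by (rule grad_sq_bound[OF fd lip]) (use mn in simp)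
        then have "\<alpha> \<omega> * (norm (gradL (\<theta> \<omega>)))\<^sup>2 \<le> 2 * L * (\<alpha> \<omega> * (emp_loss D loss (\<theta> \<omega>) - emp_loss D loss \<theta>s))"
          using a0 by (metis mult.left_commute mult_left_mono)
        then have "ennreal (\<alpha> \<omega> * (norm (gradL (\<theta> \<omega>)))\<^sup>2) \<le> ennreal (2 * L * (\<alpha> \<omega> * (emp_loss D loss (\<theta> \<omega>) - emp_loss D loss \<theta>s)))"
          by (rule ennreal_leI)
        also have "\<dots> = ennreal (2 * L) * ennreal (\<alpha> \<omega> * (emp_loss D loss (\<theta> \<omega>) - emp_loss D loss \<theta>s))"
          using L0 a0 d0 by (simp add: ennreal_mult)
        finally show "ennreal (\<alpha> \<omega> * (norm (gradL (\<theta> \<omega>)))\<^sup>2) \<le> \<dots>" .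
      qed
      also have "\<dots> = ennreal (2 * L) * (\<integral>\<^sup>+ \<omega>. ennreal (\<alpha> \<omega> * (emp_loss D loss (\<theta> \<omega>) - emp_loss D loss \<theta>s)) \<partial>M)"
        by (rule nn_integral_cmult) (unfold \<alpha>_def, use bM \<theta>M empM in measurable)
      finally show ?thesis .
    qed
    have "ennreal (2 * real b_max) * (\<integral>\<^sup>+ \<omega>. ennreal (\<alpha> \<omega> * (norm (gradL (\<theta> \<omega>)))\<^sup>2) \<partial>M)
        \<le> ennreal (2 * real b_max) * (ennreal (2 * L) * (\<integral>\<^sup>+ \<omega>. ennreal (\<alpha> \<omega> * (emp_loss D loss (\<theta> \<omega>) - emp_loss D loss \<theta>s)) \<partial>M))"
      by (rule mult_left_mono[OF Q]) simp
    also have "\<dots> = ennreal (4 * real b_max * L) * (\<integral>\<^sup>+ \<omega>. ennreal (\<alpha> \<omega> * (emp_loss D loss (\<theta> \<omega>) - emp_loss D loss \<theta>s)) \<partial>M)"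
      using L0 by (simp add: mult.assoc[symmetric] ennreal_mult[symmetric])
    finally have "ennreal (2 * real b_max) * (\<integral>\<^sup>+ \<omega>. ennreal (\<alpha> \<omega> * (norm (gradL (\<theta> \<omega>)))\<^sup>2) \<partial>M)
        \<le> ennreal (4 * real b_max * L) * (\<integral>\<^sup>+ \<omega>. ennreal (\<alpha> \<omega> * (emp_loss D loss (\<theta> \<omega>) - emp_loss D loss \<theta>s)) \<partial>M)" .
    then show ?thesis using part1 by (meson add_right_mono order_trans)
  qed
  show ?thesis using part1 part2 by blast
qed

end
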